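(* For every prime power $q$, all integers $n$, $r \le \lfloor n/2 \rfloor$ and $0 \le t \le r$, $$q^{t(n-t)} \le V_{\mathrm{C}}(t) < K_q^{-2}\, q^{t(n-t)}.$$
   Context: For integers $0\le k\le m$, ${m \brack k} = \prod_{i=0}^{k-1}\frac{q^m - q^i}{q^k - q^i}$ is the Gaussian binomial coefficient. $K_q = \prod_{j=1}^\infty (1 - q^{-j})$. For $0 \le d \le r$, $N_{\mathrm{C}}(d) = q^{d^2}{r \brack d}{n-r \brack d}$ (the number of $r$-dimensional subspaces of $\mathrm{GF}(q)^n$ at injection distance $d$ from a given one, where $d_{\mathrm{I}}(U,V) = \dim(U+V) - \min\{\dim U,\dim V\}$), and $V_{\mathrm{C}}(t) = \sum_{d=0}^t N_{\mathrm{C}}(d)$. *)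

theory Defs
  imports "HOL-Analysis.Analysis"
begin

definition gauss_binom :: "nat \<Rightarrow> nat \<Rightarrow> nat \<Rightarrow> real" where
  "gauss_binom q m k = (\<Prod>i<k. (real q ^ m - real q ^ i) / (real q ^ k - real q ^ i))"

definition K_const :: "nat \<Rightarrow> real" where
  "K_const q = (\<Prod>j. (1 - 1 / real q ^ Suc j))"

definition N_C :: "nat \<Rightarrow> nat \<Rightarrow> nat \<Rightarrow> nat \<Rightarrow> real" where
  "N_C q n r d = real q ^ (d^2) * gauss_binom q r d * gauss_binom q (n - r) d"

definition V_C :: "nat \<Rightarrow> nat \<Rightarrow> nat \<Rightarrow> nat \<Rightarrow> real" where
  "V_C q n r t = (\<Sum>d\<le>t. N_C q n r d)"

definition prime_power :: "nat \<Rightarrow> bool" where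
  "prime_power q \<longleftrightarrow> (\<exists>p k. prime p \<and> k \<ge> 1 \<and> q = p ^ k)"

end

theory Submission imports Defs begin

definition FF :: "real \<Rightarrow> nat \<Rightarrow> real" where
  "FF Q j = (\<Prod>i<j. Q ^ Suc i - 1)"

definition GG :: "real \<Rightarrow> nat \<Rightarrow> nat \<Rightarrow> real" where
  "GG Q m k = (if k \<le> m then FF Q m / (FF Q k * FF Q (m - k)) else 0)"

lemma FF_Suc: "FF Q (Suc j) = FF Q j * (Q ^ Suc j - 1)"
  by (simp add: FF_def)

lemma FF_pos: "Q \<ge> 2 \<Longrightarrow> FF Q j > 0"
proof (induction j)
  case 0 then show ?case by (simp add: FF_def)
next
  case (Suc j)
  have "Q ^ Suc j \<ge> 2 ^ Suc j" using Suc.prems by (intro power_mono) auto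
  moreover have "(2::real) ^ Suc j \<ge> 2" using one_le_power[of "2::real" j] by simp
  ultimately have "Q ^ Suc j - 1 > 0" by linarith
  then show ?case using Suc by (simp add: FF_Suc)
qed

lemma FF_split: "k \<le> m \<Longrightarrow> FF Q m = FF Q (m - k) * (\<Prod>i<k. Q ^ (m - i) - 1)"
proof (induction k)
  case 0 then show ?case by simp
next
  case (Suc k)
  then have "m - k = Suc (m - Suc k)" by simp
  then have "FF Q (m - k) = FF Q (m - Suc k) * (Q ^ (m - k) - 1)"
    by (metis FF_Suc)
  with Suc show ?case by simp
qed

lemma FF_rev: "FF Q k = (\<Prod>i<k. Q ^ (k - i) - 1)"
  using FF_split[of k k Q] by (simp add: FF_def)

lemma gb_GG:
  assumes Q: "Q = real q" "Q \<ge> 2"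
  shows "gauss_binom q m k = GG Q m k"
proof (cases "k \<le> m")
  case True
  have f: "(real q ^ m - real q ^ i) / (real q ^ k - real q ^ i) = (Q ^ (m - i) - 1) / (Q ^ (k - i) - 1)"
    if "i < k" for i
  proof -
    have m: "Q ^ m = Q ^ (m - i) * Q ^ i" using that True by (simp flip: power_add)
    have k: "Q ^ k = Q ^ (k - i) * Q ^ i" using that True by (simp flip: power_add)
    have p: "Q ^ i > 0" using Q by simp
    have g: "(x * p - p) / (y * p - p) = (x - 1) / (y - 1)" if "p > 0" for x y p :: real
    proof -
      have "x * p - p = (x - 1) * p" "y * p - p = (y - 1) * p" by (simp_all add: algebra_simps)
      then show ?thesis using that by simp
    qed
    show ?thesis using Q(1) m k g[OF p] by simp
  qed
  have "gauss_binom q m k = (\<Prod>i<k. (Q ^ (m - i) - 1) / (Q ^ (k - i) - 1))"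
    unfolding gauss_binom_def using f by (intro prod.cong) auto
  also have "\<dots> = (\<Prod>i<k. Q ^ (m - i) - 1) / (\<Prod>i<k. Q ^ (k - i) - 1)"
    by (rule prod_dividef)
  also have "\<dots> = (FF Q m / FF Q (m - k)) / FF Q k"
    using FF_split[OF True, of Q] FF_rev[of Q k] FF_pos[OF Q(2), of "m - k"] by simp
  finally show ?thesis using True by (simp add: GG_def)
next
  case False
  then have "m \<in> {..<k}" by simp
  have z: "(\<lambda>i. (real q ^ m - real q ^ i) / (real q ^ k - real q ^ i)) m = 0" by simp
  have "gauss_binom q m k = 0" unfolding gauss_binom_def
    by (rule prod_zero[OF finite_lessThan]) (use z \<open>m \<in> {..<k}\<close> in blast)
  then show ?thesis using False by (simp add: GG_def)
qed

lemma FF_0 [simp]: "FF Q 0 = 1" by (simp add: FF_def)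

lemma GG_0 [simp]: "Q \<ge> 2 \<Longrightarrow> GG Q m 0 = 1"
  using FF_pos[of Q m] by (simp add: GG_def)

lemma GG_zero_left: "GG Q 0 k = (if k = 0 then 1 else 0)"
  by (simp add: GG_def)

lemma GG_Pascal:
  assumes Q: "Q \<ge> 2"
  shows "GG Q (Suc m) (Suc k) = GG Q m k + Q ^ Suc k * GG Q m (Suc k)"
proof (cases "k < m")
  case True
  then obtain s where m: "m = Suc (k + s)" by (metis add_Suc_right less_iff_Suc_add)
  have e1: "Suc m - Suc k = Suc s" "m - k = Suc s" "m - Suc k = s" using m by auto
  have pk: "FF Q k > 0" "FF Q s > 0" "FF Q m > 0" using FF_pos[OF Q] by auto
  have a: "Q ^ Suc k - 1 > 0" "Q ^ Suc s - 1 > 0"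
    using FF_pos[OF Q, of "Suc k"] FF_pos[OF Q, of "Suc s"] pk by (auto simp: FF_Suc zero_less_mult_iff)
  have pw: "Q ^ Suc m = Q ^ Suc k * Q ^ Suc s" using m by (simp flip: power_add)
  define A where "A = FF Q m"
  define u where "u = Q ^ Suc k"
  define v where "v = Q ^ Suc s"
  have h1: "GG Q (Suc m) (Suc k) = A * (u * v - 1) / ((FF Q k * (u - 1)) * (FF Q s * (v - 1)))"
    using True unfolding GG_def A_def u_def v_def e1 FF_Suc[of Q m] FF_Suc[of Q k] FF_Suc[of Q s] pw
    by simp
  have h2: "GG Q m k = A / (FF Q k * (FF Q s * (v - 1)))"
    using True unfolding GG_def A_def v_def e1 FF_Suc[of Q s] by simp
  have h3: "GG Q m (Suc k) = A / ((FF Q k * (u - 1)) * FF Q s)"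
    using True unfolding GG_def A_def u_def e1 FF_Suc[of Q k] by simp
  have gen0: "A * ((w+1)*(z+1) - 1) / ((a*w)*(b*z)) = A/(a*(b*z)) + (w+1)*(A/((a*w)*b))"
    if "a > 0" "b > 0" "w > 0" "z > 0" for a b w z :: real
    using that by (simp add: field_simps)
  have gen: "A * (u * v - 1) / ((a * (u - 1)) * (b * (v - 1))) = A / (a * (b * (v - 1))) + u * (A / ((a * (u - 1)) * b))"
    if "a > 0" "b > 0" "u - 1 > 0" "v - 1 > 0" for a b :: real
    using gen0[OF that] by simp
  have a': "u - 1 > 0" "v - 1 > 0" using a unfolding u_def v_def by auto
  show ?thesis unfolding h1 h2 h3 u_def[symmetric]
    by (rule gen[OF pk(1,2) a'])
next
  case False
  show ?thesis
  proof (cases "k = m")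
    case True
    have "FF Q m \<noteq> 0" "FF Q (Suc m) \<noteq> 0" using FF_pos[OF Q] by (metis less_irrefl)+
    moreover have "FF Q 0 = 1" by (simp add: FF_def)
    ultimately show ?thesis using True by (simp add: GG_def)
  next
    case False
    with \<open>\<not> k < m\<close> show ?thesis by (simp add: GG_def)
  qed
qed


lemma vandermonde:
  assumes Q: "Q \<ge> 2"
  shows "GG Q (a + b) k = (\<Sum>j\<le>k. Q ^ ((a - j) * (k - j)) * GG Q a j * GG Q b (k - j))"
proof (induction a arbitrary: k)
  case 0
  have "(\<Sum>j\<le>k. Q ^ ((0 - j) * (k - j)) * GG Q 0 j * GG Q b (k - j)) = (\<Sum>j\<le>k. if j = 0 then GG Q b k else 0)"
    by (intro sum.cong) (auto simp: GG_zero_left)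
  then show ?case by simp
next
  case (Suc a)
  show ?case
  proof (cases k)
    case 0 then show ?thesis using Q by simp
  next
    case (Suc k')
    define T where "T = (\<lambda>j. Q ^ ((Suc a - j) * (k - j)) * GG Q (Suc a) j * GG Q b (k - j))"
    define U where "U = (\<lambda>j. Q ^ ((a - j) * (Suc k' - j)) * GG Q a j * GG Q b (Suc k' - j))"
    define W where "W = (\<lambda>j. Q ^ ((a - j) * (k' - j)) * GG Q a j * GG Q b (k' - j))"
    have "GG Q (Suc a + b) k = GG Q (a + b) k' + Q ^ Suc k' * GG Q (a + b) (Suc k')"
      using Suc GG_Pascal[OF Q, of "a + b" k'] by simp
    also have "\<dots> = sum W {..k'} + Q ^ Suc k' * sum U {..Suc k'}"
      unfolding W_def U_def using Suc.IH[of k'] Suc.IH[of "Suc k'"] by simp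
    also have "sum U {..Suc k'} = U 0 + (\<Sum>i\<le>k'. U (Suc i))"
      by (rule sum.atMost_Suc_shift)
    also have "Q ^ Suc k' * (U 0 + (\<Sum>i\<le>k'. U (Suc i))) = Q ^ Suc k' * U 0 + (\<Sum>i\<le>k'. Q ^ Suc k' * U (Suc i))"
      by (simp add: algebra_simps sum_distrib_left)
    also have "(\<Sum>i\<le>k'. Q ^ Suc k' * U (Suc i)) = (\<Sum>i\<le>k'. Q ^ ((a - i) * (k' - i)) * (Q ^ Suc i * GG Q a (Suc i)) * GG Q b (k' - i))"
    proof (rule sum.cong)
      fix i assume i: "i \<in> {..k'}"
      show "Q ^ Suc k' * U (Suc i) = Q ^ ((a - i) * (k' - i)) * (Q ^ Suc i * GG Q a (Suc i)) * GG Q b (k' - i)"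
      proof (cases "Suc i \<le> a")
        case True
        then obtain e where e: "a = Suc i + e" using le_Suc_ex by blast
        obtain c where c: "k' = i + c" using i le_Suc_ex by auto
        have ex: "Suc k' + (a - Suc i) * (Suc k' - Suc i) = (a - i) * (k' - i) + Suc i"
          using e c by (simp add: algebra_simps)
        have "Q ^ Suc k' * Q ^ ((a - Suc i) * (Suc k' - Suc i)) = Q ^ ((a - i) * (k' - i)) * Q ^ Suc i"
          by (simp only: ex flip: power_add)
        then show ?thesis unfolding U_def by (simp only: mult.assoc[symmetric] diff_Suc_Suc)
      next
        case False
        then show ?thesis unfolding U_def by (simp add: GG_def)
      qed
    qed simp
    also have "Q ^ Suc k' * U 0 = T 0"
    proof -
      have "Suc k' + a * Suc k' = Suc a * Suc k'" by simp
      then have "Q ^ Suc k' * Q ^ (a * Suc k') = Q ^ (Suc a * Suc k')" by (simp only: flip: power_add)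
      then show ?thesis unfolding U_def T_def using Suc Q by (simp only: mult.assoc[symmetric]) simp
    qed
    also have "sum W {..k'} + (T 0 + (\<Sum>i\<le>k'. Q ^ ((a - i) * (k' - i)) * (Q ^ Suc i * GG Q a (Suc i)) * GG Q b (k' - i)))
        = T 0 + (\<Sum>i\<le>k'. T (Suc i))"
    proof -
      have "(\<Sum>i\<le>k'. T (Suc i)) = (\<Sum>i\<le>k'. W i + Q ^ ((a - i) * (k' - i)) * (Q ^ Suc i * GG Q a (Suc i)) * GG Q b (k' - i))"
        unfolding T_def W_def using Suc GG_Pascal[OF Q, of a] by (intro sum.cong) (simp_all add: algebra_simps)
      then show ?thesis by (simp add: sum.distrib)
    qed
    also have "T 0 + (\<Sum>i\<le>k'. T (Suc i)) = sum T {..Suc k'}"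
      by (rule sum.atMost_Suc_shift[symmetric])
    finally show ?thesis unfolding T_def using Suc by simp
  qed
qed

lemma GG_sym: "k \<le> m \<Longrightarrow> GG Q m (m - k) = GG Q m k"
  by (simp add: GG_def mult.commute)

lemma vandermonde_sq:
  assumes Q: "Q \<ge> 2"
  shows "GG Q (m + t) t = (\<Sum>d\<le>t. Q ^ (d^2) * GG Q t d * GG Q m d)"
proof -
  have "GG Q (m + t) t = GG Q (t + m) t" by (simp add: add.commute)
  also have "\<dots> = (\<Sum>j\<le>t. Q ^ ((t - j) * (t - j)) * GG Q t j * GG Q m (t - j))"
    by (rule vandermonde[OF Q])
  also have "\<dots> = (\<Sum>j=0..t. Q ^ ((t - j) * (t - j)) * GG Q t j * GG Q m (t - j))"
    by (simp add: atMost_atLeast0)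
  also have "\<dots> = (\<Sum>j=0..t. Q ^ ((t - (t + 0 - j)) * (t - (t + 0 - j))) * GG Q t (t + 0 - j) * GG Q m (t - (t + 0 - j)))"
    by (rule sum.atLeastAtMost_rev)
  also have "\<dots> = (\<Sum>d=0..t. Q ^ (d^2) * GG Q t d * GG Q m d)"
    by (intro sum.cong) (auto simp: GG_sym power2_eq_square)
  finally show ?thesis by (simp add: atMost_atLeast0)
qed


lemma GG_lower:
  assumes Q: "Q = real q" "Q \<ge> 2" and km: "k \<le> m"
  shows "Q ^ (k * (m - k)) \<le> GG Q m k"
proof -
  have "Q ^ (k * (m - k)) = (\<Prod>i<k. Q ^ (m - k))"
    by (simp add: mult.commute[of k] power_mult)
  also have "\<dots> \<le> (\<Prod>i<k. (real q ^ m - real q ^ i) / (real q ^ k - real q ^ i))"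
  proof (rule prod_mono)
    fix i assume i: "i \<in> {..<k}"
    have pi: "Q ^ i > 0" using Q by simp
    have ik: "Q ^ i < Q ^ k" using i Q by (intro power_strict_increasing) auto
    have mk: "Q ^ m = Q ^ (m - k) * Q ^ k" using km by (simp flip: power_add)
    have one: "Q ^ (m - k) \<ge> 1" using Q by (intro one_le_power) auto
    have "Q ^ (m - k) * (Q ^ k - Q ^ i) \<le> Q ^ m - Q ^ i"
    proof -
      have "Q ^ i \<le> Q ^ (m - k) * Q ^ i" using mult_right_mono[OF one, of "Q ^ i"] pi by simp
      then show ?thesis using mk by (simp add: algebra_simps)
    qed
    then have "Q ^ (m - k) \<le> (Q ^ m - Q ^ i) / (Q ^ k - Q ^ i)"
      using ik by (simp add: le_divide_eq)
    then show "0 \<le> Q ^ (m - k) \<and> Q ^ (m - k) \<le> (real q ^ m - real q ^ i) / (real q ^ k - real q ^ i)"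
      using Q by simp
  qed
  also have "\<dots> = GG Q m k" using gb_GG[OF Q] unfolding gauss_binom_def by simp
  finally show ?thesis .
qed

definition PP :: "real \<Rightarrow> nat \<Rightarrow> real" where
  "PP Q k = (\<Prod>i<k. 1 - 1 / Q ^ Suc i)"

lemma fac_pos: "(Q::real) \<ge> 2 \<Longrightarrow> 0 < 1 - 1 / Q ^ Suc i" "Q \<ge> 2 \<Longrightarrow> 1 - 1 / Q ^ Suc i < 1"
proof -
  assume Q: "Q \<ge> 2"
  have "Q ^ i \<ge> 1" using one_le_power[of Q i] Q by simp
  then have "Q * 1 \<le> Q * Q ^ i" using Q by (intro mult_left_mono) auto
  then have "Q ^ Suc i \<ge> Q" by simp
  then have "Q ^ Suc i > 1" using Q by linarith
  then show "0 < 1 - 1 / Q ^ Suc i" "1 - 1 / Q ^ Suc i < 1" by (simp_all add: field_simps)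
qed

lemma PP_pos: "Q \<ge> 2 \<Longrightarrow> PP Q k > 0"
  unfolding PP_def by (intro prod_pos) (use fac_pos in auto)

lemma GG_upper:
  assumes Q: "Q = real q" "Q \<ge> 2" and km: "k \<le> m"
  shows "GG Q m k \<le> Q ^ (k * (m - k)) / PP Q k"
proof -
  have "GG Q m k = (\<Prod>i<k. (real q ^ m - real q ^ i) / (real q ^ k - real q ^ i))"
    using gb_GG[OF Q] unfolding gauss_binom_def by simp
  also have "\<dots> \<le> (\<Prod>i<k. Q ^ (m - k) / (1 - 1 / Q ^ (k - i)))"
  proof (rule prod_mono)
    fix i assume i: "i \<in> {..<k}"
    have pi: "Q ^ i > 0" using Q by simp
    have ik: "Q ^ i < Q ^ k" using i Q by (intro power_strict_increasing) auto
    have mk: "Q ^ m = Q ^ (m - k) * Q ^ k" using km by (simp flip: power_add)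
    have ki: "Q ^ k = Q ^ (k - i) * Q ^ i" using i by (simp flip: power_add)
    have mi: "Q ^ i \<le> Q ^ m" using i km Q by (intro power_increasing) auto
    have "Q ^ 1 \<le> Q ^ (k - i)" using i Q by (intro power_increasing) auto
    then have "Q \<le> Q ^ (k - i)" by simp
    then have c1: "Q ^ (k - i) > 1" using Q(2) by linarith
    have "(Q ^ m - Q ^ i) / (Q ^ k - Q ^ i) \<le> Q ^ m / (Q ^ k - Q ^ i)"
      using ik pi by (intro divide_right_mono) auto
    also have "\<dots> = Q ^ (m - k) / (1 - 1 / Q ^ (k - i))"
    proof -
      define c where "c = Q ^ (k - i)"
      define p where "p = Q ^ i"
      have "Q ^ m / (Q ^ k - Q ^ i) = Q ^ (m - k) * c * p / ((c - 1) * p)"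
        unfolding c_def p_def mk ki by (simp add: algebra_simps)
      also have "\<dots> = Q ^ (m - k) / (1 - 1 / c)"
        using c1 pi unfolding c_def[symmetric] p_def[symmetric] by (simp add: field_simps)
      finally show ?thesis unfolding c_def .
    qed
    finally show "0 \<le> (real q ^ m - real q ^ i) / (real q ^ k - real q ^ i) \<and>
        (real q ^ m - real q ^ i) / (real q ^ k - real q ^ i) \<le> Q ^ (m - k) / (1 - 1 / Q ^ (k - i))"
      using Q ik mi by simp
  qed
  also have "\<dots> = (Q ^ (m - k)) ^ k / (\<Prod>i<k. 1 - 1 / Q ^ (k - i))"
    by (simp add: prod_dividef)
  also have "(\<Prod>i<k. 1 - 1 / Q ^ (k - i)) = PP Q k"
  proof -
    have "(\<Prod>i<k. 1 - 1 / Q ^ (k - i)) = (\<Prod>i<k. (\<lambda>j. 1 - 1 / Q ^ Suc j) (k - Suc i))"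
      by (intro prod.cong) (auto simp: Suc_diff_Suc)
    also have "\<dots> = PP Q k" unfolding PP_def by (rule prod.nat_diff_reindex)
    finally show ?thesis .
  qed
  finally show ?thesis by (simp add: mult.commute[of k] power_mult)
qed


lemma K_facts:
  assumes Q: "Q = real q" "Q \<ge> 2"
  shows "K_const q > 0" "\<And>k. K_const q < PP Q k"
proof -
  define f where "f = (\<lambda>j. 1 - 1 / Q ^ Suc j)"
  have K: "K_const q = prodinf f" unfolding K_const_def f_def Q(1) ..
  have fpos: "\<And>j. f j > 0" and flt: "\<And>j. f j < 1" unfolding f_def using fac_pos[OF Q(2)] by auto
  have "summable (\<lambda>i. (1 / Q) * (1 / Q) ^ i)"
    using Q(2) by (intro summable_mult summable_geometric) auto
  moreover have "(\<lambda>i. norm (f i - 1)) = (\<lambda>i. (1 / Q) * (1 / Q) ^ i)"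
    using Q(2) by (auto simp: f_def power_one_over)
  ultimately have "summable (\<lambda>i. norm (f i - 1))" by simp
  then have cp: "convergent_prod f"
    by (intro abs_convergent_prod_imp_convergent_prod) (simp add: abs_convergent_prod_conv_summable)
  show "K_const q > 0" unfolding K
    by (rule has_prod_pos[OF convergent_prod_has_prod[OF cp] fpos])
  have le: "prodinf f \<le> PP Q n" for n
  proof (rule prodinf_le_const[OF cp])
    fix m assume "m \<ge> n"
    then show "prod f {..<m} \<le> PP Q n"
    proof (induction rule: dec_induct)
      case base then show ?case by (simp add: PP_def f_def)
    next
      case (step m)
      have "prod f {..<Suc m} = prod f {..<m} * f m" by simp
      also have "\<dots> \<le> prod f {..<m} * 1"
        using fpos flt by (intro mult_left_mono prod_nonneg) (auto intro: less_imp_le)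
      finally show ?case using step by simp
    qed
  qed
  fix k
  have "PP Q (Suc k) = PP Q k * f k" by (simp add: PP_def f_def)
  also have "\<dots> < PP Q k * 1" using PP_pos[OF Q(2)] flt by (intro mult_strict_left_mono) auto
  finally show "K_const q < PP Q k" using le[of "Suc k"] K by simp
qed

lemma GG_upper_strict:
  assumes Q: "Q = real q" "Q \<ge> 2" and km: "k \<le> m"
  shows "GG Q m k < Q ^ (k * (m - k)) / K_const q"
proof -
  have "GG Q m k \<le> Q ^ (k * (m - k)) / PP Q k" by (rule GG_upper[OF Q km])
  also have "\<dots> < Q ^ (k * (m - k)) / K_const q"
    using K_facts[OF Q] Q(2) PP_pos[OF Q(2), of k] by (intro divide_strict_left_mono) auto
  finally show ?thesis .
qed

lemma GG_nonneg:
  assumes Q: "Q = real q" "Q \<ge> 2"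
  shows "GG Q m k \<ge> 0"
proof (cases "k \<le> m")
  case True
  have "Q ^ (k * (m - k)) \<ge> 0" using Q by simp
  then show ?thesis using GG_lower[OF Q True] by linarith
qed (simp add: GG_def)

lemma GG_trans:
  assumes Q: "Q = real q" "Q \<ge> 2" and dt: "d \<le> t" and tr: "t \<le> r"
  shows "GG Q r d \<le> GG Q r t * GG Q t d"
proof -
  have gen: "A / (B * C) * (B / (D * E)) = A / (D * G) * (G / (E * C))"
    if "B > 0" "C > 0" "D > 0" "E > 0" "G > 0" for A B C D E G :: real
    using that by (simp add: field_simps)
  have e: "r - d - (t - d) = r - t" using dt tr by simp
  have i1: "GG Q r t * GG Q t d = FF Q r / (FF Q t * FF Q (r - t)) * (FF Q t / (FF Q d * FF Q (t - d)))"
    using dt tr by (simp add: GG_def)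
  have i2: "GG Q r d * GG Q (r - d) (t - d) = FF Q r / (FF Q d * FF Q (r - d)) * (FF Q (r - d) / (FF Q (t - d) * FF Q (r - t)))"
    using dt tr e by (simp add: GG_def)
  have id: "GG Q r t * GG Q t d = GG Q r d * GG Q (r - d) (t - d)"
    unfolding i1 i2 by (rule gen) (simp_all add: FF_pos[OF Q(2)])
  have "1 \<le> Q ^ ((t - d) * (r - d - (t - d)))" using Q by (intro one_le_power) auto
  also have "\<dots> \<le> GG Q (r - d) (t - d)" using dt tr by (intro GG_lower[OF Q]) auto
  finally have "GG Q r d * 1 \<le> GG Q r d * GG Q (r - d) (t - d)"
    using GG_nonneg[OF Q] by (intro mult_left_mono) auto
  then show ?thesis using id by simp
qed

theorem lemma3:
  fixes q n r t :: nat
  assumes "prime_power q" and "r \<le> n div 2" and "t \<le> r"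
  shows "real q ^ (t * (n - t)) \<le> V_C q n r t \<and>
         V_C q n r t < real q ^ (t * (n - t)) / (K_const q)^2"
proof -
  obtain p k where pk: "prime p" "k \<ge> 1" "q = p ^ k" using assms(1) unfolding prime_power_def by blast
  have "p \<noteq> 0" "p \<noteq> 1" using pk(1) by auto
  then have "p \<ge> 2" by linarith
  have "p ^ 1 \<le> p ^ k" using pk(2) \<open>p \<ge> 2\<close> by (intro power_increasing) auto
  then have "q \<ge> 2" using pk(3) \<open>p \<ge> 2\<close> by simp
  define Q where "Q = real q"
  have Q: "Q = real q" "Q \<ge> 2" using \<open>q \<ge> 2\<close> unfolding Q_def by auto
  define m where "m = n - r"
  have rm: "r \<le> m" "t \<le> m" using assms(2,3) unfolding m_def by auto
  have NC: "N_C q n r d = Q ^ (d^2) * GG Q r d * GG Q m d" for d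
    unfolding N_C_def m_def Q_def using gb_GG[OF Q] Q_def by simp
  have V: "V_C q n r t = (\<Sum>d\<le>t. Q ^ (d^2) * GG Q r d * GG Q m d)"
    unfolding V_C_def NC ..
  have Qp: "Q > 0" using Q by simp
  obtain a where a: "r = t + a" using assms(3) le_Suc_ex by blast
  obtain b where b: "m = t + b" using rm le_Suc_ex by blast
  have nrm: "n = r + m" using assms(2) unfolding m_def by simp
  have ex1: "t^2 + t * (r - t) + t * (m - t) = t * (n - t)"
    using a b nrm by (simp add: power2_eq_square algebra_simps)
  have ex2: "t * (r - t) + t * (m + t - t) = t * (n - t)"
    using a b nrm by (simp add: algebra_simps)
  have "Q ^ (t * (n - t)) = Q ^ (t^2) * Q ^ (t * (r - t)) * Q ^ (t * (m - t))"
    by (simp only: ex1[symmetric] power_add)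
  also have "\<dots> \<le> Q ^ (t^2) * GG Q r t * GG Q m t"
  proof -
    have "0 \<le> Q ^ (t^2) * GG Q r t" using GG_nonneg[OF Q, of r t] Qp by simp
    then show ?thesis using GG_lower[OF Q assms(3)] GG_lower[OF Q rm(2)] Qp
      by (intro mult_mono mult_left_mono) auto
  qed
  also have "\<dots> \<le> V_C q n r t" unfolding V
    by (rule member_le_sum) (use GG_nonneg[OF Q] Qp in auto)
  finally have low: "Q ^ (t * (n - t)) \<le> V_C q n r t" .
  have "V_C q n r t \<le> (\<Sum>d\<le>t. GG Q r t * (Q ^ (d^2) * GG Q t d * GG Q m d))"
    unfolding V
  proof (rule sum_mono)
    fix d assume d: "d \<in> {..t}"
    have "GG Q r d \<le> GG Q r t * GG Q t d" using d assms(3) by (intro GG_trans[OF Q]) auto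
    then have "Q ^ (d^2) * GG Q r d * GG Q m d \<le> Q ^ (d^2) * (GG Q r t * GG Q t d) * GG Q m d"
      using GG_nonneg[OF Q] Qp by (intro mult_right_mono mult_left_mono) auto
    then show "Q ^ (d^2) * GG Q r d * GG Q m d \<le> GG Q r t * (Q ^ (d^2) * GG Q t d * GG Q m d)"
      by (simp add: algebra_simps)
  qed
  also have "\<dots> = GG Q r t * GG Q (m + t) t"
    by (simp add: sum_distrib_left[symmetric] vandermonde_sq[OF Q(2)])
  also have "\<dots> < (Q ^ (t * (r - t)) / K_const q) * (Q ^ (t * (m + t - t)) / K_const q)"
  proof -
    have x: "GG Q r t < Q ^ (t * (r - t)) / K_const q" by (rule GG_upper_strict[OF Q assms(3)])
    have y: "GG Q (m + t) t < Q ^ (t * (m + t - t)) / K_const q" by (rule GG_upper_strict[OF Q]) simp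
    have "GG Q r t * GG Q (m + t) t \<le> GG Q r t * (Q ^ (t * (m + t - t)) / K_const q)"
      using y GG_nonneg[OF Q] by (intro mult_left_mono) auto
    also have "\<dots> < (Q ^ (t * (r - t)) / K_const q) * (Q ^ (t * (m + t - t)) / K_const q)"
      using x K_facts(1)[OF Q] Qp by (intro mult_strict_right_mono) auto
    finally show ?thesis .
  qed
  also have "\<dots> = Q ^ (t * (n - t)) / (K_const q)^2"
    by (simp add: ex2[symmetric] power_add power2_eq_square)
  finally show ?thesis using low unfolding Q_def by simp
qed

end
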